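(* Let $\alpha,\beta$ be parameters, $q$ an indeterminate, $E_{n,k}(\alpha,\beta,q)$ the numbers defined in the context, and $E_n(x;q)=\sum_{k=0}^nE_{n,k}(\alpha,\beta,q)x^k$. Then: (i) for $n\ge1$, $E_{n}(x;q)=\bigl([\beta]+q^\beta[n-1+\alpha]x\bigr)E_{n-1}(x;q)+(1-x)xq^{\beta}\delta_{x}(E_{n-1}(x;q))$; (ii) for $n\ge0$, $\dfrac{E_{n}(x;q)}{(x;q)_{n+\alpha+\beta}}=\sum_{j\ge 0}x^j\begin{bmatrix}j+\alpha+\beta-1\\ j\end{bmatrix}[j+\beta]^n$; (iii) $\displaystyle\sum_{n\ge 0}\frac{E_{n}(x;q)}{(x;q)_{n+\alpha+\beta}}\frac{t^n}{n!}=\sum_{j\ge 0}x^j\begin{bmatrix}j+\alpha+\beta-1\\ j\end{bmatrix}\exp([j+\beta]t)$; (iv) for $n,j\ge0$, $\displaystyle\sum_{k=0}^{j}\begin{bmatrix}j-k+n+\alpha+\beta-1\\ j-k\end{bmatrix}E_{n,k}(\alpha,\beta,q)=\begin{bmatrix}j+\alpha+\beta-1\\ j\end{bmatrix}[j+\beta]^n$; (v) for $n\ge k\ge0$, $\displaystyle E_{n,k}(\alpha,\beta,q)=\sum_{j=0}^{k}\begin{bmatrix}n+\alpha+\beta\\ k-j\end{bmatrix}\begin{bmatrix}j+\alpha+\beta-1\\ j\end{bmatrix}(-1)^{k-j}q^{\binom{k-j}{2}}[\beta+j]^{n}$.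
   Context: For a real $x$, $[x]=\frac{1-q^x}{1-q}$. The numbers $E_{n,k}(\alpha,\beta,q)$ are determined by $E_{0,0}=1$, $E_{n,k}=0$ if $k\notin\{0,\dots,n\}$, and for $n\ge1$: $E_{n,k}(\alpha,\beta,q)=q^{\beta+k-1}[n-k+\alpha]E_{n-1,k-1}(\alpha,\beta,q)+[k+\beta]E_{n-1,k}(\alpha,\beta,q)$. The $q$-derivative is $\delta_x p(x)=\frac{p(qx)-p(x)}{(q-1)x}$. $q$-Pochhammer: $(x;q)_\infty=\prod_{i\ge0}(1-xq^i)$ and for real $N$, $(x;q)_N=(x;q)_\infty/(xq^N;q)_\infty$ (so $(x;q)_0=1$, $(x;q)_n=\prod_{i=0}^{n-1}(1-xq^i)$ for integers $n\ge1$). For real $x$ and integer $n\ge0$, $\begin{bmatrix}x\\ n\end{bmatrix}=\frac{(q^{x-n+1};q)_n}{(q;q)_n}$. *)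

theory Defs
  imports "HOL-Analysis.Analysis"
begin

definition qint :: "real \<Rightarrow> real \<Rightarrow> real" where
  "qint q x = (1 - q powr x) / (1 - q)"

fun qE :: "real \<Rightarrow> real \<Rightarrow> real \<Rightarrow> nat \<Rightarrow> nat \<Rightarrow> real" where
  "qE a b q 0 k = (if k = 0 then 1 else 0)"
| "qE a b q (Suc n) k =
     (if k \<le> Suc n then
        (if k = 0 then 0
         else q powr (b + real k - 1) * qint q (real (Suc n) - real k + a) * qE a b q n (k - 1))
        + qint q (real k + b) * qE a b q n k
      else 0)"

definition qEpoly :: "real \<Rightarrow> real \<Rightarrow> real \<Rightarrow> nat \<Rightarrow> real \<Rightarrow> real" where
  "qEpoly a b q n x = (\<Sum>k\<le>n. qE a b q n k * x ^ k)"

definition qderiv :: "real \<Rightarrow> (real \<Rightarrow> real) \<Rightarrow> real \<Rightarrow> real" where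
  "qderiv q p x = (p (q * x) - p x) / ((q - 1) * x)"

definition qpoch_inf :: "real \<Rightarrow> real \<Rightarrow> real" where
  "qpoch_inf x q = (\<Prod>i. (1 - x * q ^ i))"

definition qpoch :: "real \<Rightarrow> real \<Rightarrow> real \<Rightarrow> real" where
  "qpoch x q N = qpoch_inf x q / qpoch_inf (x * q powr N) q"

definition qpoch_fin :: "real \<Rightarrow> real \<Rightarrow> nat \<Rightarrow> real" where
  "qpoch_fin x q n = (\<Prod>i<n. (1 - x * q ^ i))"

definition qbinom :: "real \<Rightarrow> real \<Rightarrow> nat \<Rightarrow> real" where
  "qbinom q x n = qpoch_fin (q powr (x - real n + 1)) q n / qpoch_fin q q n"

end

theory Submission
  imports Defs "HOL-Computational_Algebra.Formal_Power_Series"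
begin


lemma qE_zero: "n < k \<Longrightarrow> qE a b q n k = 0"
  by (induction n arbitrary: k) auto

lemma qE_Suc: "qE a b q (Suc n) k =
   (if k = 0 then 0 else q powr (b + real k - 1) * qint q (real (Suc n) - real k + a) * qE a b q n (k - 1))
   + qint q (real k + b) * qE a b q n k"
  by (cases "k \<le> Suc n") (auto simp: qE_zero)

lemma qint_add: "q \<noteq> 1 \<Longrightarrow> 0 < q \<Longrightarrow> qint q (x + y) = qint q x + q powr x * qint q y"
  unfolding qint_def by (simp add: powr_add field_simps)

lemma qint_nat: "0 < q \<Longrightarrow> qint q (real k) = (1 - q ^ k) / (1 - q)"
  unfolding qint_def by (simp add: powr_realpow)

lemma part1:
  assumes q: "0 < q" "q \<noteq> 1"
  shows "qEpoly a b q (Suc m) x =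
        (qint q b + q powr b * qint q (real (Suc m) - 1 + a) * x) * qEpoly a b q m x
        + (1 - x) * x * q powr b * qderiv q (\<lambda>y. qEpoly a b q m y) x"
proof (cases "x = 0")
  case True
  then show ?thesis by (simp add: qEpoly_def qderiv_def qE_Suc zero_power)
next
  case False
  let ?E = "qE a b q m"
  have D: "x * qderiv q (\<lambda>y. qEpoly a b q m y) x = (\<Sum>k\<le>m. ?E k * qint q (real k) * x ^ k)"
  proof -
    have "x * qderiv q (\<lambda>y. qEpoly a b q m y) x = (\<Sum>k\<le>m. ?E k * ((q*x)^k - x^k)) / (q - 1)"
    proof -
      have "x * qderiv q (\<lambda>y. qEpoly a b q m y) x = (qEpoly a b q m (q*x) - qEpoly a b q m x) / (q - 1)"
        using False q by (simp add: qderiv_def)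
      then show ?thesis by (simp add: qEpoly_def sum_subtractf[symmetric] algebra_simps)
    qed
    also have "\<dots> = (\<Sum>k\<le>m. ?E k * qint q (real k) * x ^ k)"
      using q by (simp add: sum_divide_distrib qint_nat power_mult_distrib) (rule sum.cong, simp_all add: field_simps)
    finally show ?thesis .
  qed
  have L: "qEpoly a b q (Suc m) x = (\<Sum>k\<le>m. q powr (b + real k) * qint q (real m - real k + a) * ?E k * x ^ Suc k)
      + (\<Sum>k\<le>m. qint q (real k + b) * ?E k * x ^ k)"
  proof -
    have "qEpoly a b q (Suc m) x = (\<Sum>k\<le>Suc m. (if k = 0 then 0 else q powr (b + real k - 1) * qint q (real (Suc m) - real k + a) * ?E (k - 1)) * x ^ k)
       + (\<Sum>k\<le>Suc m. qint q (real k + b) * ?E k * x ^ k)"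
      by (simp add: qEpoly_def qE_Suc distrib_right sum.distrib mult.assoc)
    also have "(\<Sum>k\<le>Suc m. (if k = 0 then 0 else q powr (b + real k - 1) * qint q (real (Suc m) - real k + a) * ?E (k - 1)) * x ^ k)
       = (\<Sum>k\<le>m. q powr (b + real k) * qint q (real m - real k + a) * ?E k * x ^ Suc k)"
      by (subst sum.atMost_Suc_shift) (simp add: algebra_simps)
    also have "(\<Sum>k\<le>Suc m. qint q (real k + b) * ?E k * x ^ k) = (\<Sum>k\<le>m. qint q (real k + b) * ?E k * x ^ k)"
      by (simp add: qE_zero)
    finally show ?thesis .
  qed
  have T1: "q powr (b + real k) * qint q (real m - real k + a) = q powr b * (qint q (real m + a) - qint q (real k))" for k
    using qint_add[OF q(2) q(1), of "real k" "real m - real k + a"] by (simp add: powr_add algebra_simps)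
  have T2: "qint q (real k + b) = qint q b + q powr b * qint q (real k)" for k
    using qint_add[OF q(2) q(1), of b "real k"] by (simp add: add.commute)
  have R: "(qint q b + q powr b * qint q (real (Suc m) - 1 + a) * x) * qEpoly a b q m x
        + (1 - x) * x * q powr b * qderiv q (\<lambda>y. qEpoly a b q m y) x
      = (\<Sum>k\<le>m. q powr b * (qint q (real m + a) - qint q (real k)) * ?E k * x ^ Suc k)
      + (\<Sum>k\<le>m. (qint q b + q powr b * qint q (real k)) * ?E k * x ^ k)"
  proof -
    have "(1 - x) * x * q powr b * qderiv q (\<lambda>y. qEpoly a b q m y) x = (1 - x) * q powr b * (x * qderiv q (\<lambda>y. qEpoly a b q m y) x)"
      by simp
    also have "\<dots> = (1 - x) * q powr b * (\<Sum>k\<le>m. ?E k * qint q (real k) * x ^ k)" by (simp add: D)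
    finally have e: "(1 - x) * x * q powr b * qderiv q (\<lambda>y. qEpoly a b q m y) x = (1 - x) * q powr b * (\<Sum>k\<le>m. ?E k * qint q (real k) * x ^ k)" .
    show ?thesis apply (subst e) unfolding qEpoly_def
      by (simp add: sum_distrib_left sum_distrib_right sum.distrib[symmetric] sum_subtractf[symmetric] algebra_simps)
  qed
  show ?thesis unfolding L R T1 T2 ..
qed

definition gq :: "real \<Rightarrow> real \<Rightarrow> nat \<Rightarrow> real" where
  "gq q M m = qpoch_fin (q powr M) q m / qpoch_fin q q m"

lemma qbinom_gq: "qbinom q (real m + M - 1) m = gq q M m"
  unfolding qbinom_def gq_def by simp

lemma gq_0[simp]: "gq q M 0 = 1"
  unfolding gq_def qpoch_fin_def by simp

lemma qpow_ne1: "0 < (q::real) \<Longrightarrow> q \<noteq> 1 \<Longrightarrow> 0 < n \<Longrightarrow> q ^ n \<noteq> 1"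
proof (cases "q < 1")
  case True
  assume "0 < q" "0 < n"
  then have "q ^ n < 1" using True power_strict_decreasing[of 0 n q] by simp
  then show ?thesis by simp
next
  case False
  assume "0 < q" "q \<noteq> 1" "0 < n"
  then have "1 < q" using False by simp
  then have "1 < q ^ n" using \<open>0 < n\<close> by (simp add: one_less_power)
  then show ?thesis by simp
qed

lemma qpoch_fin_q_nz: "0 < q \<Longrightarrow> q \<noteq> 1 \<Longrightarrow> qpoch_fin q q m \<noteq> 0"
  unfolding qpoch_fin_def using qpow_ne1[of q "Suc _"] by (simp add: prod_zero_iff)

lemma scalar_id:
  assumes q: "0 < q" "q \<noteq> 1"
  shows "(1 - q ^ Suc p) * (qint q N - qint q B) + (1 - q powr (N + 1) * q ^ p) * qint q B
       = (1 - q powr N) * qint q (real (Suc p) + B)"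
proof -
  have d: "1 - q \<noteq> 0" using q by simp
  have e: "(1 - q*Z)*((1-X) - (1-Y)) + (1 - X*q*Z)*(1-Y) = (1-X)*(1-q*Z*Y)" for X Y Z :: real
    by (simp add: algebra_simps)
  show ?thesis unfolding qint_def using q e[of "q ^ p" "q powr N" "q powr B"]
    by (simp add: powr_add powr_realpow diff_divide_distrib[symmetric] add_divide_distrib[symmetric] mult.assoc)
qed

lemma term_id:
  assumes q: "0 < q" "q \<noteq> 1"
  shows "gq q (N + 1) p * (qint q N - qint q B) + gq q (N + 1) (Suc p) * qint q B
       = gq q N (Suc p) * qint q (real (Suc p) + B)"
proof -
  define P where "P = qpoch_fin (q powr (N + 1)) q p"
  define F where "F = qpoch_fin q q p"
  have F: "F \<noteq> 0" using qpoch_fin_q_nz[OF q] F_def by simp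
  have F1: "qpoch_fin q q (Suc p) = F * (1 - q ^ Suc p)" unfolding F_def qpoch_fin_def by simp
  have P1: "qpoch_fin (q powr (N + 1)) q (Suc p) = P * (1 - q powr (N + 1) * q ^ p)"
    unfolding P_def qpoch_fin_def by simp
  have P2: "qpoch_fin (q powr N) q (Suc p) = (1 - q powr N) * P"
    unfolding P_def qpoch_fin_def prod.lessThan_Suc_shift
    using q by (simp add: powr_add mult.assoc)
  have nz: "1 - q ^ Suc p \<noteq> 0" using qpoch_fin_q_nz[OF q, of "Suc p"] F1 by auto
  have "gq q (N + 1) p * (qint q N - qint q B) + gq q (N + 1) (Suc p) * qint q B
      = P / F * ((1 - q ^ Suc p) * (qint q N - qint q B) + (1 - q powr (N + 1) * q ^ p) * qint q B) / (1 - q ^ Suc p)"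
    unfolding gq_def P1 F1 using F nz by (simp add: P_def F_def field_simps)
  also have "\<dots> = gq q N (Suc p) * qint q (real (Suc p) + B)"
    unfolding scalar_id[OF q] gq_def P2 F1 using F nz by (simp add: field_simps)
  finally show ?thesis .
qed

lemma part4_gen:
  assumes q: "0 < q" "q \<noteq> 1"
  shows "(\<Sum>k\<le>j. gq q (real n + a + b) (j - k) * qE a b q n k) = gq q (a + b) j * qint q (real j + b) ^ n"
proof (induction n arbitrary: j)
  case 0
  have "(\<Sum>k\<le>j. gq q (real 0 + a + b) (j - k) * qE a b q 0 k) = (\<Sum>k\<le>j. if k = 0 then gq q (a + b) j else 0)"
    by (rule sum.cong) auto
  then show ?case by simp
next
  case (Suc n)
  define N where "N = real n + a + b"
  have NS: "real (Suc n) + a + b = N + 1" unfolding N_def by simp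
  let ?E = "qE a b q n"
  have A: "q powr (b + real k) * (qint q (real n - real k + a) * y) = (qint q N - qint q (real k + b)) * y" for k y
    using qint_add[OF q(2) q(1), of "real k + b" "real n - real k + a"] unfolding N_def
    by (simp add: algebra_simps)
  have claim: "(\<Sum>k\<le>j. gq q (N + 1) (j - k) * qE a b q (Suc n) k) = (\<Sum>k\<le>j. gq q N (j - k) * ?E k) * qint q (real j + b)"
  proof (cases j)
    case 0
    then show ?thesis by (simp add: qE_Suc)
  next
    case (Suc j')
    have "(\<Sum>k\<le>j. gq q (N + 1) (j - k) * qE a b q (Suc n) k)
       = (\<Sum>k\<le>Suc j'. gq q (N + 1) (Suc j' - k) * (if k = 0 then 0 else q powr (b + real k - 1) * qint q (real (Suc n) - real k + a) * ?E (k - 1)))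
       + (\<Sum>k\<le>Suc j'. gq q (N + 1) (Suc j' - k) * qint q (real k + b) * ?E k)"
      unfolding Suc qE_Suc by (simp add: distrib_left sum.distrib mult.assoc)
    also have "(\<Sum>k\<le>Suc j'. gq q (N + 1) (Suc j' - k) * (if k = 0 then 0 else q powr (b + real k - 1) * qint q (real (Suc n) - real k + a) * ?E (k - 1)))
       = (\<Sum>k\<le>j'. gq q (N + 1) (j' - k) * (qint q N - qint q (real k + b)) * ?E k)"
      by (subst sum.atMost_Suc_shift) (simp add: A mult.assoc)
    also have "(\<Sum>k\<le>Suc j'. gq q (N + 1) (Suc j' - k) * qint q (real k + b) * ?E k)
       = (\<Sum>k\<le>j'. gq q (N + 1) (Suc j' - k) * qint q (real k + b) * ?E k) + qint q (real (Suc j') + b) * ?E (Suc j')"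
      by simp
    finally have "(\<Sum>k\<le>j. gq q (N + 1) (j - k) * qE a b q (Suc n) k)
      = (\<Sum>k\<le>j'. (gq q (N + 1) (j' - k) * (qint q N - qint q (real k + b)) + gq q (N + 1) (Suc j' - k) * qint q (real k + b)) * ?E k)
        + qint q (real (Suc j') + b) * ?E (Suc j')"
      by (simp add: sum.distrib distrib_right)
    also have "(\<Sum>k\<le>j'. (gq q (N + 1) (j' - k) * (qint q N - qint q (real k + b)) + gq q (N + 1) (Suc j' - k) * qint q (real k + b)) * ?E k)
       = (\<Sum>k\<le>j'. gq q N (Suc j' - k) * qint q (real (Suc j') + b) * ?E k)"
    proof (rule sum.cong[OF refl])
      fix k assume "k \<in> {..j'}"
      then have k: "k \<le> j'" by simp
      have e1: "Suc j' - k = Suc (j' - k)" using k by simp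
      have e2: "real (Suc (j' - k)) + (real k + b) = real (Suc j') + b" using k by simp
      show "(gq q (N + 1) (j' - k) * (qint q N - qint q (real k + b)) + gq q (N + 1) (Suc j' - k) * qint q (real k + b)) * ?E k
         = gq q N (Suc j' - k) * qint q (real (Suc j') + b) * ?E k"
        unfolding e1 term_id[OF q] e2 ..
    qed
    finally have "(\<Sum>k\<le>j. gq q (N + 1) (j - k) * qE a b q (Suc n) k)
      = (\<Sum>k\<le>j'. gq q N (Suc j' - k) * qint q (real (Suc j') + b) * ?E k) + qint q (real (Suc j') + b) * ?E (Suc j')" .
    also have "\<dots> = (\<Sum>k\<le>Suc j'. gq q N (Suc j' - k) * ?E k) * qint q (real (Suc j') + b)"
      by (simp add: sum_distrib_right sum_distrib_left algebra_simps del: qE.simps)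
    finally show ?thesis unfolding Suc .
  qed
  show ?case unfolding NS claim using Suc.IH[of j] unfolding N_def by simp
qed

definition hq :: "real \<Rightarrow> real \<Rightarrow> nat \<Rightarrow> real" where
  "hq q N m = qbinom q N m * (-1) ^ m * q ^ (m choose 2)"

lemma hq_rec:
  assumes q: "0 < q"
  shows "hq q N (Suc m) * (1 - q ^ Suc m) = hq q N m * (q powr N - q ^ m)"
proof -
  have num: "qpoch_fin (q powr (N - real (Suc m) + 1)) q (Suc m)
     = (1 - q powr (N - real m)) * qpoch_fin (q powr (N - real m + 1)) q m"
  proof -
    have f1: "q powr (N - real (Suc m) + 1) * q ^ Suc i = q powr (N - real m + 1) * q ^ i" for i
      using q by (simp add: powr_add powr_diff field_simps)
    have f0: "q powr (N - real (Suc m) + 1) * q ^ 0 = q powr (N - real m)"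
      using q by (simp add: powr_add powr_diff field_simps)
    show ?thesis unfolding qpoch_fin_def prod.lessThan_Suc_shift f1 f0 ..
  qed
  have den: "qpoch_fin q q (Suc m) = qpoch_fin q q m * (1 - q ^ Suc m)"
    unfolding qpoch_fin_def by simp
  have ch: "Suc m choose 2 = (m choose 2) + m"
    by (cases m) (simp_all add: choose_two)
  have pw: "q powr (N - real m) = q powr N / q ^ m"
    using q by (simp add: powr_diff powr_realpow)
  show ?thesis
  proof (cases "1 - q ^ Suc m = 0")
    case True
    then have "q = 1" using q qpow_ne1[of q "Suc m"] by fastforce
    then show ?thesis using True by simp
  next
    case False
    have F: "qpoch_fin q q m \<noteq> 0" using False den
      by (metis mult_eq_0_iff qpoch_fin_q_nz[OF q] power_one power_Suc diff_self mult_1)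
    show ?thesis
      unfolding hq_def qbinom_def num den ch power_add pw
      using False F q
      by (simp add: field_simps)
  qed
qed

lemma gq_rec:
  assumes q: "0 < q"
  shows "gq q N (Suc m) * (1 - q ^ Suc m) = gq q N m * (1 - q powr N * q ^ m)"
proof (cases "q = 1")
  case True then show ?thesis by simp
next
  case False
  have F: "qpoch_fin q q m \<noteq> 0" by (rule qpoch_fin_q_nz[OF q False])
  have nz: "1 - q ^ Suc m \<noteq> 0" using qpow_ne1[OF q False, of "Suc m"] by simp
  show ?thesis unfolding gq_def qpoch_fin_def using F nz unfolding qpoch_fin_def
    by (simp add: field_simps)
qed

definition scl :: "real \<Rightarrow> real fps \<Rightarrow> real fps" where
  "scl q f = Abs_fps (\<lambda>n. q ^ n * fps_nth f n)"

lemma scl_mult: "scl q (f * g) = scl q f * scl q g"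
proof (rule fps_ext)
  fix n
  have "fps_nth (scl q f * scl q g) n = (\<Sum>i=0..n. q ^ n * (fps_nth f i * fps_nth g (n - i)))"
    unfolding fps_mult_nth scl_def
    by (rule sum.cong) (auto simp: power_add[symmetric])
  then show "fps_nth (scl q (f * g)) n = fps_nth (scl q f * scl q g) n"
    unfolding scl_def by (simp add: fps_mult_nth sum_distrib_left)
qed

lemma lin_nth: "fps_nth ((f::real fps) * (1 - fps_const c * fps_X)) n = fps_nth f n - (if n = 0 then 0 else c * fps_nth f (n - 1))"
proof -
  have "f * (1 - fps_const c * fps_X) = f - fps_const c * (fps_X * f)" by (simp add: right_diff_distrib mult.commute mult.left_commute)
  then show ?thesis by simp
qed

lemma AB_one:
  assumes q: "0 < q" "q \<noteq> 1"
  shows "Abs_fps (gq q N) * Abs_fps (hq q N) = 1"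
proof -
  define u where "u = q powr N"
  define A where "A = Abs_fps (hq q N)"
  define B where "B = Abs_fps (gq q N)"
  define L1 where "L1 = (1 - fps_const u * fps_X :: real fps)"
  define L2 where "L2 = (1 - fps_const 1 * fps_X :: real fps)"
  have eA: "A * L1 = scl q A * L2"
  proof (rule fps_ext)
    fix n show "fps_nth (A * L1) n = fps_nth (scl q A * L2) n"
    proof (cases n)
      case 0 then show ?thesis unfolding L1_def L2_def lin_nth by (simp add: A_def scl_def)
    next
      case (Suc m)
      show ?thesis unfolding L1_def L2_def lin_nth using hq_rec[OF q(1), of N m] unfolding Suc
        by (simp add: A_def scl_def u_def algebra_simps)
    qed
  qed
  have eB: "B * L2 = scl q B * L1"
  proof (rule fps_ext)
    fix n show "fps_nth (B * L2) n = fps_nth (scl q B * L1) n"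
    proof (cases n)
      case 0 then show ?thesis unfolding L1_def L2_def lin_nth by (simp add: B_def scl_def)
    next
      case (Suc m)
      show ?thesis unfolding L1_def L2_def lin_nth using gq_rec[OF q(1), of N m] unfolding Suc
        by (simp add: B_def scl_def u_def algebra_simps)
    qed
  qed
  define C where "C = B * A"
  have "C * (L1 * L2) = scl q C * (L1 * L2)"
  proof -
    have "C * (L1 * L2) = (A * L1) * (B * L2)" unfolding C_def by (simp add: algebra_simps)
    also have "\<dots> = (scl q A * L2) * (scl q B * L1)" unfolding eA eB ..
    also have "\<dots> = scl q C * (L1 * L2)" unfolding C_def scl_mult by (simp add: algebra_simps)
    finally show ?thesis .
  qed
  moreover have "L1 * L2 \<noteq> 0"
  proof -
    have "fps_nth (L1 * L2) 0 = 1" unfolding L1_def L2_def by simp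
    then show ?thesis by auto
  qed
  ultimately have CC: "C = scl q C" by simp
  show ?thesis unfolding C_def[symmetric, unfolded B_def A_def]
  proof (rule fps_ext)
    fix n show "fps_nth C n = fps_nth 1 n"
    proof (cases n)
      case 0 then show ?thesis by (simp add: C_def A_def B_def hq_def qbinom_def qpoch_fin_def binomial_eq_0)
    next
      case (Suc m)
      have "fps_nth C n = q ^ n * fps_nth C n" using arg_cong[OF CC, of "\<lambda>f. fps_nth f n"] unfolding scl_def by simp
      moreover have "q ^ n \<noteq> 1" using qpow_ne1[OF q, of n] Suc by simp
      ultimately have "fps_nth C n = 0" by (metis mult_cancel_right2)
      then show ?thesis using Suc by simp
    qed
  qed
qed

lemma part4:
  assumes q: "0 < q" "q \<noteq> 1"
  shows "(\<Sum>k\<le>j. qbinom q (real j - real k + real n + a + b - 1) (j - k) * qE a b q n k)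
        = qbinom q (real j + a + b - 1) j * qint q (real j + b) ^ n"
proof -
  have "(\<Sum>k\<le>j. qbinom q (real j - real k + real n + a + b - 1) (j - k) * qE a b q n k)
      = (\<Sum>k\<le>j. gq q (real n + a + b) (j - k) * qE a b q n k)"
  proof (rule sum.cong[OF refl])
    fix k assume "k \<in> {..j}"
    then have "real j - real k + real n + a + b - 1 = real (j - k) + (real n + a + b) - 1" by simp
    then show "qbinom q (real j - real k + real n + a + b - 1) (j - k) * qE a b q n k = gq q (real n + a + b) (j - k) * qE a b q n k"
      by (simp only: qbinom_gq)
  qed
  also have "\<dots> = gq q (a + b) j * qint q (real j + b) ^ n" by (rule part4_gen[OF q])
  also have "gq q (a + b) j = qbinom q (real j + a + b - 1) j"
    using qbinom_gq[of q j "a + b"] by (simp add: add.assoc)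
  finally show ?thesis .
qed

lemma part5:
  assumes q: "0 < q" "q \<noteq> 1"
  shows "qE a b q n k =
        (\<Sum>j\<le>k. qbinom q (real n + a + b) (k - j) * qbinom q (real j + a + b - 1) j
           * (-1) ^ (k - j) * q ^ ((k - j) choose 2) * qint q (b + real j) ^ n)"
proof -
  define N where "N = real n + a + b"
  define A where "A = Abs_fps (hq q N)"
  define B where "B = Abs_fps (gq q N)"
  define Ef where "Ef = Abs_fps (qE a b q n)"
  have BA: "B * A = 1" unfolding A_def B_def by (rule AB_one[OF q])
  have Cj: "fps_nth (Ef * B) j = qbinom q (real j + a + b - 1) j * qint q (b + real j) ^ n" for j
  proof -
    have "fps_nth (Ef * B) j = (\<Sum>k\<le>j. gq q N (j - k) * qE a b q n k)"
      unfolding fps_mult_nth Ef_def B_def atLeast0AtMost by (simp add: mult.commute)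
    also have "\<dots> = qbinom q (real j + a + b - 1) j * qint q (b + real j) ^ n"
    proof -
      have "gq q (a + b) j = qbinom q (real j + a + b - 1) j" using qbinom_gq[of q j "a + b"] by (simp add: add.assoc)
      then show ?thesis unfolding N_def part4_gen[OF q] by (simp add: add.commute)
    qed
    finally show ?thesis .
  qed
  have "qE a b q n k = fps_nth (Ef * (B * A)) k" unfolding BA Ef_def by simp
  also have "\<dots> = fps_nth ((Ef * B) * A) k" by (simp add: mult.assoc)
  also have "\<dots> = (\<Sum>j\<le>k. fps_nth (Ef * B) j * hq q N (k - j))"
    unfolding fps_mult_nth atLeast0AtMost A_def by simp
  also have "\<dots> = (\<Sum>j\<le>k. qbinom q (real n + a + b) (k - j) * qbinom q (real j + a + b - 1) j
           * (-1) ^ (k - j) * q ^ ((k - j) choose 2) * qint q (b + real j) ^ n)"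
    unfolding Cj hq_def N_def by (simp add: ac_simps)
  finally show ?thesis .
qed



lemma qprod_lim:
  assumes q: "0 < q" "q < 1" and z: "\<bar>z\<bar> < 1"
  shows "(\<lambda>K. \<Prod>i<K. (1 - z * q ^ i)) \<longlonglongrightarrow> qpoch_inf z q" "qpoch_inf z q \<noteq> 0"
proof -
  have fz: "(\<lambda>i. 1 - z * q ^ i) = (\<lambda>i. 1 + (- (z * q ^ i)))" by simp
  have sg: "summable (\<lambda>i. \<bar>- (z * q ^ i)\<bar>)"
    using q by (simp add: abs_mult power_abs summable_mult summable_geometric)
  have nz: "- (z * q ^ i) \<noteq> -1" for i
  proof -
    have "\<bar>z * q ^ i\<bar> \<le> \<bar>z\<bar>" using q by (simp add: abs_mult power_le_one mult_left_le)
    then show ?thesis using z by auto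
  qed
  have cp: "convergent_prod (\<lambda>i. 1 - z * q ^ i)"
    unfolding fz by (rule summable_imp_convergent_prod_real[OF sg nz])
  have "(\<lambda>n. \<Prod>i\<le>n. 1 - z * q ^ i) \<longlonglongrightarrow> qpoch_inf z q"
    unfolding qpoch_inf_def by (rule convergent_prod_LIMSEQ[OF cp])
  then have "(\<lambda>n. \<Prod>i<Suc n. 1 - z * q ^ i) \<longlonglongrightarrow> qpoch_inf z q"
    by (simp add: lessThan_Suc_atMost)
  then show "(\<lambda>K. \<Prod>i<K. (1 - z * q ^ i)) \<longlonglongrightarrow> qpoch_inf z q"
    by (rule LIMSEQ_imp_Suc)
  have "1 - z * q ^ i \<noteq> 0" for i using nz[of i] by simp
  then show "qpoch_inf z q \<noteq> 0" unfolding qpoch_inf_def by (intro prodinf_nonzero[OF cp])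
qed

lemma gq_Suc:
  assumes q: "0 < q" "q < 1"
  shows "gq q M (Suc m) = gq q M m * (1 - q powr M * q ^ m) / (1 - q ^ Suc m)"
proof -
  have "q ^ Suc m < 1" using q power_strict_decreasing[of 0 "Suc m" q] by simp
  then show ?thesis using gq_rec[OF q(1), of M m] by (simp add: field_simps)
qed

lemma gq_abs_summable:
  assumes q: "0 < q" "q < 1" and y: "\<bar>y\<bar> < 1"
  shows "summable (\<lambda>m. \<bar>gq q M m * y ^ m\<bar>)"
proof -
  define c where "c = (1 + \<bar>y\<bar>) / 2"
  have c: "c < 1" "\<bar>y\<bar> < c" using y unfolding c_def by auto
  define r where "r m = \<bar>1 - q powr M * q ^ m\<bar> / (1 - q ^ Suc m) * \<bar>y\<bar>" for m
  have qz: "(\<lambda>m. q ^ m) \<longlonglongrightarrow> 0" using q by (intro LIMSEQ_power_zero) simp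
  have "(\<lambda>m. q ^ Suc m) \<longlonglongrightarrow> 0" using LIMSEQ_Suc[OF qz] by simp
  then have "r \<longlonglongrightarrow> \<bar>1 - q powr M * 0\<bar> / (1 - 0) * \<bar>y\<bar>"
    unfolding r_def by (intro tendsto_intros qz) auto
  then have "r \<longlonglongrightarrow> \<bar>y\<bar>" by simp
  then have "eventually (\<lambda>m. r m < c) sequentially" using c by (intro order_tendstoD(2))
  then obtain N where N: "\<And>m. m \<ge> N \<Longrightarrow> r m < c" by (auto simp: eventually_sequentially)
  show ?thesis
  proof (rule summable_ratio_test[OF c(1), of N])
    fix n assume "N \<le> n"
    have pos: "0 < 1 - q ^ Suc n" using q power_strict_decreasing[of 0 "Suc n" q] by simp
    have "norm \<bar>gq q M (Suc n) * y ^ Suc n\<bar> = \<bar>gq q M n * y ^ n\<bar> * r n"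
    proof -
      have e: "gq q M (Suc n) * y ^ Suc n = (gq q M n * y ^ n) * ((1 - q powr M * q ^ n) / (1 - q ^ Suc n) * y)"
        unfolding gq_Suc[OF q] by simp
      show ?thesis unfolding e r_def using pos by (simp add: abs_mult abs_divide)
    qed
    also have "\<dots> \<le> \<bar>gq q M n * y ^ n\<bar> * c" using N[OF \<open>N \<le> n\<close>] by (intro mult_left_mono) auto
    finally show "norm \<bar>gq q M (Suc n) * y ^ Suc n\<bar> \<le> c * norm \<bar>gq q M n * y ^ n\<bar>" by (simp add: mult.commute)
  qed
qed

lemma gq_summable:
  assumes q: "0 < q" "q < 1" and y: "\<bar>y\<bar> < 1"
  shows "summable (\<lambda>m. gq q M m * y ^ m)"
  using gq_abs_summable[OF assms] by (rule summable_rabs_cancel)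

lemma gq_funeq:
  assumes q: "0 < q" "q < 1" and y: "\<bar>y\<bar> < 1"
  shows "(\<Sum>m. gq q M m * y ^ m) * (1 - y) = (\<Sum>m. gq q M m * (q * y) ^ m) * (1 - q powr M * y)"
proof -
  define u where "u = q powr M"
  let ?g = "gq q M"
  have qy: "\<bar>q * y\<bar> < 1" using q y by (simp add: abs_mult) (metis abs_ge_zero less_le_trans mult_left_le_one_le not_le order_less_imp_le)
  have s1: "(\<lambda>m. ?g m * y ^ m) sums (\<Sum>m. ?g m * y ^ m)" using gq_summable[OF q y] by (rule summable_sums)
  have s3: "(\<lambda>m. ?g m * (q * y) ^ m) sums (\<Sum>m. ?g m * (q * y) ^ m)" using gq_summable[OF q qy] by (rule summable_sums)
  define F where "F m = (if m = 0 then 0 else ?g (m - 1) * y ^ m)" for m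
  define F' where "F' m = (if m = 0 then 0 else u * y * (?g (m - 1) * (q * y) ^ (m - 1)))" for m
  have s2: "F sums (y * (\<Sum>m. ?g m * y ^ m))"
  proof -
    have "(\<lambda>m. F (Suc m)) sums (y * (\<Sum>m. ?g m * y ^ m))"
      unfolding F_def using sums_mult[OF s1, of y] by (simp add: ac_simps)
    then have "F sums (y * (\<Sum>m. ?g m * y ^ m) + F 0)" using sums_Suc_iff[of F] by blast
    moreover have "F 0 = 0" by (simp add: F_def)
    ultimately show ?thesis by simp
  qed
  have s4: "F' sums (u * y * (\<Sum>m. ?g m * (q * y) ^ m))"
  proof -
    have "(\<lambda>m. F' (Suc m)) sums (u * y * (\<Sum>m. ?g m * (q * y) ^ m))"
      unfolding F'_def using sums_mult[OF s3, of "u * y"] by simp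
    then have "F' sums (u * y * (\<Sum>m. ?g m * (q * y) ^ m) + F' 0)" using sums_Suc_iff[of F'] by blast
    moreover have "F' 0 = 0" by (simp add: F'_def)
    ultimately show ?thesis by simp
  qed
  have L: "(\<lambda>m. ?g m * y ^ m - F m) sums ((\<Sum>m. ?g m * y ^ m) * (1 - y))"
    using sums_diff[OF s1 s2] by (simp add: algebra_simps)
  have R: "(\<lambda>m. ?g m * (q * y) ^ m - F' m) sums ((\<Sum>m. ?g m * (q * y) ^ m) * (1 - u * y))"
    using sums_diff[OF s3 s4] by (simp add: algebra_simps)
  have eq: "(\<lambda>m. ?g m * y ^ m - F m) = (\<lambda>m. ?g m * (q * y) ^ m - F' m)"
  proof
    fix m show "?g m * y ^ m - F m = ?g m * (q * y) ^ m - F' m"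
    proof (cases m)
      case 0 then show ?thesis by (simp add: F_def F'_def)
    next
      case (Suc p)
      have "?g (Suc p) * (1 - q ^ Suc p) = ?g p * (1 - u * q ^ p)" unfolding u_def by (rule gq_rec[OF q(1)])
      then have "y ^ Suc p * (?g (Suc p) * (1 - q ^ Suc p)) = y ^ Suc p * (?g p * (1 - u * q ^ p))" by simp
      then show ?thesis unfolding Suc F_def F'_def by (simp add: algebra_simps power_mult_distrib)
    qed
  qed
  show ?thesis using sums_unique2[OF L[unfolded eq] R] unfolding u_def .
qed

lemma qbin:
  assumes q: "0 < q" "q < 1" and x: "\<bar>x\<bar> < 1" and xM: "\<bar>x\<bar> * q powr M < 1"
  shows "(\<lambda>m. gq q M m * x ^ m) sums (1 / qpoch x q M)"
proof -
  define S where "S y = (\<Sum>m. gq q M m * y ^ m)" for y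
  define u where "u = q powr M"
  have qK: "\<bar>q ^ K * x\<bar> < 1" for K
  proof -
    have "\<bar>q ^ K * x\<bar> \<le> \<bar>x\<bar>" using q by (simp add: abs_mult power_le_one mult_left_le_one_le)
    then show ?thesis using x by simp
  qed
  have iter: "S x * (\<Prod>i<K. (1 - x * q ^ i)) = S (q ^ K * x) * (\<Prod>i<K. (1 - (x * u) * q ^ i))" for K
  proof (induction K)
    case 0 then show ?case by simp
  next
    case (Suc K)
    have fe: "S (q ^ K * x) * (1 - q ^ K * x) = S (q ^ Suc K * x) * (1 - u * (q ^ K * x))"
      using gq_funeq[OF q qK[of K], of M] unfolding S_def u_def by (simp add: mult.assoc)
    have "S x * (\<Prod>i<Suc K. (1 - x * q ^ i)) = (S x * (\<Prod>i<K. (1 - x * q ^ i))) * (1 - q ^ K * x)"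
      by (simp add: ac_simps)
    also have "\<dots> = (\<Prod>i<K. (1 - (x * u) * q ^ i)) * (S (q ^ K * x) * (1 - q ^ K * x))"
      unfolding Suc.IH by (simp add: ac_simps)
    also have "\<dots> = S (q ^ Suc K * x) * (\<Prod>i<Suc K. (1 - (x * u) * q ^ i))"
      unfolding fe by (simp add: ac_simps)
    finally show ?case .
  qed
  have xu: "\<bar>x * u\<bar> < 1" using xM q unfolding u_def by (simp add: abs_mult)
  have l1: "(\<lambda>K. S x * (\<Prod>i<K. (1 - x * q ^ i))) \<longlonglongrightarrow> S x * qpoch_inf x q"
    by (intro tendsto_intros qprod_lim(1)[OF q x])
  have cont: "isCont S 0"
    unfolding S_def
    by (rule isCont_powser[of _ "1/2"]) (use gq_summable[OF q, of "1/2" M] in auto)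
  have S0: "S 0 = 1" unfolding S_def by simp
  have "(\<lambda>K. q ^ K * x) \<longlonglongrightarrow> 0 * x" using q by (intro tendsto_intros LIMSEQ_power_zero) simp
  then have "(\<lambda>K. S (q ^ K * x)) \<longlonglongrightarrow> S 0" using isCont_tendsto_compose[OF cont, of "\<lambda>K. q ^ K * x"] by simp
  then have l2: "(\<lambda>K. S (q ^ K * x) * (\<Prod>i<K. (1 - (x * u) * q ^ i))) \<longlonglongrightarrow> 1 * qpoch_inf (x * u) q"
    unfolding S0 by (intro tendsto_intros qprod_lim(1)[OF q xu])
  have "S x * qpoch_inf x q = qpoch_inf (x * u) q"
    using LIMSEQ_unique[OF l1 l2[folded iter]] by simp
  then have "S x = 1 / qpoch x q M"
    using qprod_lim(2)[OF q x] unfolding qpoch_def u_def by (simp add: field_simps)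
  then show ?thesis using summable_sums[OF gq_summable[OF q x, of M]] unfolding S_def by simp
qed

lemma part2:
  assumes q: "0 < q" "q < 1" and x: "\<bar>x\<bar> < 1" and xM: "\<bar>x\<bar> * q powr (real n + a + b) < 1"
  shows "(\<lambda>j. x ^ j * qbinom q (real j + a + b - 1) j * qint q (real j + b) ^ n)
        sums (qEpoly a b q n x / qpoch x q (real n + a + b))"
proof -
  define N where "N = real n + a + b"
  define e where "e k = qE a b q n k * x ^ k" for k
  define g where "g m = gq q N m * x ^ m" for m
  have q1: "q \<noteq> 1" using q by simp
  have fin: "\<And>k. k \<notin> {..n} \<Longrightarrow> e k = 0" unfolding e_def by (simp add: qE_zero)
  have se: "summable (\<lambda>k. norm (e k))" by (rule summable_finite[of "{..n}"]) (use fin in auto)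
  have sg: "summable (\<lambda>k. norm (g k))" unfolding g_def using gq_abs_summable[OF q x] by simp
  have Se0: "(\<Sum>k. e k) = (\<Sum>k\<le>n. e k)" using suminf_finite[of "{..n}" e] fin by auto
  have Se: "(\<Sum>k. e k) = qEpoly a b q n x" unfolding Se0 by (simp add: qEpoly_def e_def)
  have Sg: "(\<Sum>k. g k) = 1 / qpoch x q N" unfolding g_def using qbin[OF q x xM[folded N_def]] by (simp add: sums_iff)
  have cp: "(\<lambda>j. \<Sum>i\<le>j. e i * g (j - i)) sums (qEpoly a b q n x / qpoch x q N)"
    using Cauchy_product_sums[OF se sg] unfolding Se Sg by simp
  have eq: "(\<Sum>i\<le>j. e i * g (j - i)) = x ^ j * qbinom q (real j + a + b - 1) j * qint q (real j + b) ^ n" for j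
  proof -
    have "(\<Sum>i\<le>j. e i * g (j - i)) = x ^ j * (\<Sum>i\<le>j. gq q N (j - i) * qE a b q n i)"
      unfolding sum_distrib_left e_def g_def
      by (rule sum.cong[OF refl]) (auto simp: power_add[symmetric] ac_simps)
    also have "\<dots> = x ^ j * (gq q (a + b) j * qint q (real j + b) ^ n)" unfolding N_def part4_gen[OF q(1) q1] ..
    also have "gq q (a + b) j = qbinom q (real j + a + b - 1) j" using qbinom_gq[of q j "a + b"] by (simp add: add.assoc)
    finally show ?thesis by simp
  qed
  show ?thesis using cp unfolding eq N_def .
qed

lemma qint_bound:
  assumes q: "0 < q" "q < 1"
  shows "\<bar>qint q (real j + b)\<bar> \<le> (1 + q powr b) / (1 - q)"
proof -
  have e: "q powr (real j + b) = q ^ j * q powr b" using q by (simp add: powr_add powr_realpow)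
  have "q ^ j \<le> 1" using q by (simp add: power_le_one)
  then have "q ^ j * q powr b \<le> q powr b" using q by (simp add: mult_left_le_one_le)
  moreover have "0 \<le> q ^ j * q powr b" using q by simp
  ultimately have "\<bar>1 - q powr (real j + b)\<bar> \<le> 1 + q powr b" unfolding e by linarith
  then show ?thesis unfolding qint_def using q by (simp add: abs_divide divide_right_mono)
qed

lemma part3:
  assumes q: "0 < q" "q < 1" and x: "\<bar>x\<bar> < 1" and xab: "\<bar>x\<bar> * q powr (a + b) < 1"
  shows "summable (\<lambda>j. x ^ j * qbinom q (real j + a + b - 1) j * exp (qint q (real j + b) * t))
      \<and> (\<lambda>n. qEpoly a b q n x / qpoch x q (real n + a + b) * t ^ n / fact n)
          sums (\<Sum>j. x ^ j * qbinom q (real j + a + b - 1) j * exp (qint q (real j + b) * t))"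
proof -
  define w where "w j = x ^ j * qbinom q (real j + a + b - 1) j" for j
  define c where "c j = qint q (real j + b)" for j
  define T where "T n = qEpoly a b q n x / qpoch x q (real n + a + b)" for n
  define f where "f p = w (fst p) * (c (fst p) * t) ^ (snd p) / fact (snd p)" for p
  define Cb where "Cb = (1 + q powr b) / (1 - q)"
  have cb: "\<bar>c j\<bar> \<le> Cb" for j unfolding c_def Cb_def by (rule qint_bound[OF q])
  have Cb0: "0 \<le> Cb" using cb[of 0] by linarith
  have wg: "w j = gq q (a + b) j * x ^ j" for j
    unfolding w_def using qbinom_gq[of q j "a + b"] by (simp add: add.assoc)
  have sw: "summable (\<lambda>j. \<bar>w j\<bar>)" unfolding wg using gq_abs_summable[OF q x] .
  have expser: "(\<lambda>n. z ^ n / fact n) sums exp z" for z :: real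
    using exp_converges[of z] by (simp add: divide_inverse_commute scaleR_conv_of_real)
  have row: "(\<lambda>n. f (j, n)) sums (w j * exp (c j * t))" for j
    unfolding f_def using sums_mult[OF expser[of "c j * t"], of "w j"] by (simp add: ac_simps)
  have rowabs: "(\<lambda>n. \<bar>f (j, n)\<bar>) sums (\<bar>w j\<bar> * exp (\<bar>c j * t\<bar>))" for j
    unfolding f_def using sums_mult[OF expser[of "\<bar>c j * t\<bar>"], of "\<bar>w j\<bar>"]
    by (simp add: abs_mult abs_divide power_abs ac_simps)
  define G where "G j = \<bar>w j\<bar> * exp (\<bar>c j * t\<bar>)" for j
  have sG: "summable G"
  proof (rule summable_comparison_test'[OF summable_mult2[OF sw, of "exp (Cb * \<bar>t\<bar>)"], of 0])
    fix j :: nat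
    have "\<bar>c j * t\<bar> \<le> Cb * \<bar>t\<bar>" using cb[of j] by (simp add: abs_mult mult_right_mono)
    then have "exp (\<bar>c j * t\<bar>) \<le> exp (Cb * \<bar>t\<bar>)" by simp
    then show "norm (G j) \<le> \<bar>w j\<bar> * exp (Cb * \<bar>t\<bar>)" unfolding G_def by (simp add: mult_left_mono)
  qed
  have Fsum: "(\<lambda>p. norm (f p)) summable_on Sigma UNIV (\<lambda>_. UNIV)"
  proof (rule summable_on_SigmaI[where g = G])
    show "((\<lambda>n. norm (f (j, n))) has_sum G j) UNIV" for j
      unfolding G_def real_norm_def by (rule sums_nonneg_imp_has_sum[OF rowabs]) simp
    show "G summable_on UNIV" by (rule summable_nonneg_imp_summable_on[OF sG]) (simp add: G_def)
  qed simp
  have fsum: "f summable_on Sigma UNIV (\<lambda>_. UNIV)"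
    by (rule abs_summable_summable) (use Fsum in simp)
  have fhas: "(f has_sum infsum f UNIV) (Sigma UNIV (\<lambda>_. UNIV))"
    using has_sum_infsum[OF fsum] by simp
  have A1: "((\<lambda>j. w j * exp (c j * t)) has_sum infsum f UNIV) UNIV"
  proof (rule has_sum_Sigma'[OF fhas])
    fix j :: nat
    have "summable (\<lambda>n. norm (f (j, n)))" using rowabs[of j] by (simp add: sums_iff)
    then show "((\<lambda>n. f (j, n)) has_sum w j * exp (c j * t)) UNIV"
      by (rule norm_summable_imp_has_sum[OF _ row])
  qed
  have fhas': "((\<lambda>(n, j). f (j, n)) has_sum infsum f UNIV) (UNIV \<times> UNIV)"
    using has_sum_swap[THEN iffD1, OF fhas] by simp
  have A2: "((\<lambda>n. T n * t ^ n / fact n) has_sum infsum f UNIV) UNIV"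
  proof (rule has_sum_Sigma'[of "\<lambda>p. f (snd p, fst p)"])
    show "((\<lambda>p. f (snd p, fst p)) has_sum infsum f UNIV) (Sigma UNIV (\<lambda>_. UNIV))"
      using fhas' by (simp add: case_prod_unfold)
    fix n :: nat
    have xn: "\<bar>x\<bar> * q powr (real n + a + b) < 1"
    proof -
      have "q powr (real n + a + b) = q ^ n * q powr (a + b)" using q by (simp add: powr_add powr_realpow add.assoc)
      also have "\<dots> \<le> q powr (a + b)" using q by (simp add: power_le_one mult_left_le_one_le)
      finally show ?thesis using xab by (meson abs_ge_zero le_less_trans mult_left_mono)
    qed
    have p2: "(\<lambda>j. w j * c j ^ n) sums T n" unfolding w_def c_def T_def using part2[OF q x xn] .
    have col: "(\<lambda>j. f (j, n)) sums (T n * t ^ n / fact n)"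
      unfolding f_def using sums_mult2[OF p2, of "t ^ n / fact n"] by (simp add: power_mult_distrib ac_simps)
    have "summable (\<lambda>j. norm (f (j, n)))"
    proof (rule summable_comparison_test'[OF summable_mult2[OF sw, of "(Cb * \<bar>t\<bar>) ^ n / fact n"], of 0])
      fix j :: nat
      have "\<bar>c j * t\<bar> ^ n \<le> (Cb * \<bar>t\<bar>) ^ n"
        using cb[of j] by (intro power_mono) (auto simp: abs_mult mult_right_mono)
      then show "norm (norm (f (j, n))) \<le> \<bar>w j\<bar> * ((Cb * \<bar>t\<bar>) ^ n / fact n)"
        unfolding f_def by (simp add: abs_mult abs_divide power_abs mult_left_mono divide_right_mono)
    qed
    then show "((\<lambda>j. f (snd (n, j), fst (n, j))) has_sum T n * t ^ n / fact n) UNIV"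
      using norm_summable_imp_has_sum[OF _ col] by simp
  qed
  have S1: "(\<lambda>j. w j * exp (c j * t)) sums infsum f UNIV" by (rule has_sum_imp_sums[OF A1])
  have S2: "(\<lambda>n. T n * t ^ n / fact n) sums infsum f UNIV" by (rule has_sum_imp_sums[OF A2])
  show ?thesis using S1 S2 unfolding w_def c_def T_def by (simp add: sums_iff)
qed

theorem theorem1p2:
  fixes a b :: real
  shows
  "(\<forall>q x n. 0 < q \<and> q \<noteq> 1 \<and> n \<ge> 1 \<longrightarrow>
      qEpoly a b q n x =
        (qint q b + q powr b * qint q (real n - 1 + a) * x) * qEpoly a b q (n - 1) x
        + (1 - x) * x * q powr b * qderiv q (\<lambda>y. qEpoly a b q (n - 1) y) x)
   \<and> (\<forall>q x n. 0 < q \<and> q < 1 \<and> \<bar>x\<bar> < 1 \<and> \<bar>x\<bar> * q powr (real n + a + b) < 1 \<longrightarrow>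
      (\<lambda>j. x ^ j * qbinom q (real j + a + b - 1) j * qint q (real j + b) ^ n)
        sums (qEpoly a b q n x / qpoch x q (real n + a + b)))
   \<and> (\<forall>q x t. 0 < q \<and> q < 1 \<and> \<bar>x\<bar> < 1 \<and> \<bar>x\<bar> * q powr (a + b) < 1 \<longrightarrow>
      summable (\<lambda>j. x ^ j * qbinom q (real j + a + b - 1) j * exp (qint q (real j + b) * t))
      \<and> (\<lambda>n. qEpoly a b q n x / qpoch x q (real n + a + b) * t ^ n / fact n)
          sums (\<Sum>j. x ^ j * qbinom q (real j + a + b - 1) j * exp (qint q (real j + b) * t)))
   \<and> (\<forall>q n j. 0 < q \<and> q \<noteq> 1 \<longrightarrow>
      (\<Sum>k\<le>j. qbinom q (real j - real k + real n + a + b - 1) (j - k) * qE a b q n k)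
        = qbinom q (real j + a + b - 1) j * qint q (real j + b) ^ n)
   \<and> (\<forall>q n k. 0 < q \<and> q \<noteq> 1 \<and> k \<le> n \<longrightarrow>
      qE a b q n k =
        (\<Sum>j\<le>k. qbinom q (real n + a + b) (k - j) * qbinom q (real j + a + b - 1) j
           * (-1) ^ (k - j) * q ^ ((k - j) choose 2) * qint q (b + real j) ^ n))"
proof (intro conjI allI impI)
  fix q x :: real and n :: nat
  assume h: "0 < q \<and> q \<noteq> 1 \<and> n \<ge> 1"
  then obtain m where n: "n = Suc m" by (cases n) auto
  show "qEpoly a b q n x =
        (qint q b + q powr b * qint q (real n - 1 + a) * x) * qEpoly a b q (n - 1) x
        + (1 - x) * x * q powr b * qderiv q (\<lambda>y. qEpoly a b q (n - 1) y) x"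
    unfolding n using part1[of q a b m x] h by simp
next
  fix q x :: real and n :: nat
  assume h: "0 < q \<and> q < 1 \<and> \<bar>x\<bar> < 1 \<and> \<bar>x\<bar> * q powr (real n + a + b) < 1"
  then show "(\<lambda>j. x ^ j * qbinom q (real j + a + b - 1) j * qint q (real j + b) ^ n)
        sums (qEpoly a b q n x / qpoch x q (real n + a + b))"
    using part2[of q x n a b] by blast
next
  fix q x t :: real
  assume h: "0 < q \<and> q < 1 \<and> \<bar>x\<bar> < 1 \<and> \<bar>x\<bar> * q powr (a + b) < 1"
  then show "summable (\<lambda>j. x ^ j * qbinom q (real j + a + b - 1) j * exp (qint q (real j + b) * t))"
    using part3[of q x a b t] by blast
  from h show "(\<lambda>n. qEpoly a b q n x / qpoch x q (real n + a + b) * t ^ n / fact n)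
          sums (\<Sum>j. x ^ j * qbinom q (real j + a + b - 1) j * exp (qint q (real j + b) * t))"
    using part3[of q x a b t] by blast
next
  fix q :: real and n j :: nat
  assume "0 < q \<and> q \<noteq> 1"
  then show "(\<Sum>k\<le>j. qbinom q (real j - real k + real n + a + b - 1) (j - k) * qE a b q n k)
        = qbinom q (real j + a + b - 1) j * qint q (real j + b) ^ n"
    using part4[of q j n a b] by blast
next
  fix q :: real and n k :: nat
  assume "0 < q \<and> q \<noteq> 1 \<and> k \<le> n"
  then show "qE a b q n k =
        (\<Sum>j\<le>k. qbinom q (real n + a + b) (k - j) * qbinom q (real j + a + b - 1) j
           * (-1) ^ (k - j) * q ^ ((k - j) choose 2) * qint q (b + real j) ^ n)"
    using part5[of q a b n k] by blast
qed

end
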